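(* Let $0<\beta<1$, $T>0$, $n_T$ a positive integer, $\tau=T/n_T$ and $t_k=k\tau$. Let $\varrho_j$ be defined by $(1-z)^{-\beta}=\sum_{j=0}^\infty \varrho_j z^j$ and set $P_{j}:=\tau^{\beta}\varrho_{j}$. Then for any real $\mu>0$, $$\mu\sum_{j=0}^{k-1}P_{k-j}\,E_\beta(\mu t_j^{\beta})\le E_\beta(\mu t_k^{\beta})-1,\qquad 1\le k\le n_T,$$ where $E_\beta(z)=\sum_{l=0}^\infty \frac{z^l}{\Gamma(1+l\beta)}$ is the Mittag-Leffler function. *)

theory Defs
  imports "HOL-Analysis.Analysis"
begin

definition ml_rho :: "real \<Rightarrow> nat \<Rightarrow> real" where
  "ml_rho \<beta> = (THE c. \<forall>z::real. \<bar>z\<bar> < 1 \<longrightarrow>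
       (\<lambda>j. c j * z ^ j) sums ((1 - z) powr (- \<beta>)))"

definition mittag_leffler :: "real \<Rightarrow> real \<Rightarrow> real" where
  "mittag_leffler \<beta> z = (\<Sum>l. z ^ l / Gamma (1 + real l * \<beta>))"

end

theory Submission imports Defs begin

lemma powser_shift:
  fixes a :: "nat \<Rightarrow> real"
  assumes "(\<lambda>n. a n * z^n) sums s" "z \<noteq> 0"
  shows "(\<lambda>n. a (Suc n) * z^n) sums ((s - a 0) / z)"
proof -
  have "(\<lambda>n. a (Suc n) * z^(Suc n)) sums (s - a 0)"
    using assms(1) by (subst sums_Suc_iff) simp
  then have "(\<lambda>n. a (Suc n) * z^(Suc n) / z) sums ((s - a 0) / z)"
    by (rule sums_divide)
  moreover have "(\<lambda>n. a (Suc n) * z^(Suc n) / z) = (\<lambda>n. a (Suc n) * z^n)"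
    using assms(2) by (auto simp: field_simps)
  ultimately show ?thesis by simp
qed

lemma powser_coeff_unique:
  fixes a b :: "nat \<Rightarrow> real"
  assumes "\<And>z. \<bar>z\<bar> < 1 \<Longrightarrow> z \<noteq> 0 \<Longrightarrow> (\<lambda>n. a n * z^n) sums f z"
      and "\<And>z. \<bar>z\<bar> < 1 \<Longrightarrow> z \<noteq> 0 \<Longrightarrow> (\<lambda>n. b n * z^n) sums f z"
  shows "a m = b m"
  using assms
proof (induction m arbitrary: a b f)
  case 0
  have "(f \<longlongrightarrow> a 0) (at 0)"
    by (rule powser_limit_0_strong[of 1]) (use 0 in auto)
  moreover have "(f \<longlongrightarrow> b 0) (at 0)"
    by (rule powser_limit_0_strong[of 1]) (use 0 in auto)
  ultimately show ?case using tendsto_unique by (metis trivial_limit_at)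
next
  case (Suc m)
  have ab0: "a 0 = b 0"
  proof -
    have "(f \<longlongrightarrow> a 0) (at 0)"
      by (rule powser_limit_0_strong[of 1]) (use Suc.prems in auto)
    moreover have "(f \<longlongrightarrow> b 0) (at 0)"
      by (rule powser_limit_0_strong[of 1]) (use Suc.prems in auto)
    ultimately show ?thesis using tendsto_unique by (metis trivial_limit_at)
  qed
  have "(\<lambda>n. a (Suc n)) m = (\<lambda>n. b (Suc n)) m"
  proof (rule Suc.IH[where f = "\<lambda>z. (f z - a 0) / z"])
    fix z :: real assume "\<bar>z\<bar> < 1" "z \<noteq> 0"
    show "(\<lambda>n. a (Suc n) * z^n) sums ((f z - a 0) / z)"
      using powser_shift[OF Suc.prems(1)] \<open>\<bar>z\<bar> < 1\<close> \<open>z \<noteq> 0\<close> by blast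
    show "(\<lambda>n. b (Suc n) * z^n) sums ((f z - a 0) / z)"
      using powser_shift[OF Suc.prems(2)] \<open>\<bar>z\<bar> < 1\<close> \<open>z \<noteq> 0\<close> ab0 by metis
  qed
  then show ?case by simp
qed

lemma rho_series:
  fixes z \<beta> :: real
  assumes "\<bar>z\<bar> < 1"
  shows "(\<lambda>j. (pochhammer \<beta> j / fact j) * z ^ j) sums ((1 - z) powr (- \<beta>))"
proof -
  have "\<bar>-z\<bar> < 1" using assms by simp
  from gen_binomial_real[OF this, of "-\<beta>"]
  have "(\<lambda>n. ((- \<beta>) gchoose n) * (-z)^n) sums (1 - z) powr (- \<beta>)" by simp
  moreover have "((- \<beta>) gchoose n) * (-z)^n = (pochhammer \<beta> n / fact n) * z ^ n" for n
  proof -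
    have "((- \<beta>) gchoose n) * (-z)^n = ((-1)^n * (-1)^n) * (pochhammer \<beta> n / fact n) * z ^ n"
      by (simp add: gbinomial_pochhammer power_minus[of z])
    also have "(-1::real)^n * (-1)^n = 1" by (simp flip: power_add)
    finally show ?thesis by simp
  qed
  ultimately show ?thesis by simp
qed

lemma ml_rho_eq: "ml_rho \<beta> = (\<lambda>j. pochhammer \<beta> j / fact j)"
  unfolding ml_rho_def
proof (rule the_equality)
  show "\<forall>z::real. \<bar>z\<bar> < 1 \<longrightarrow> (\<lambda>j. (pochhammer \<beta> j / fact j) * z ^ j) sums ((1 - z) powr (- \<beta>))"
    using rho_series by blast
next
  fix c assume c: "\<forall>z::real. \<bar>z\<bar> < 1 \<longrightarrow> (\<lambda>j. c j * z ^ j) sums ((1 - z) powr (- \<beta>))"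
  show "c = (\<lambda>j. pochhammer \<beta> j / fact j)"
  proof
    fix m
    show "c m = pochhammer \<beta> m / fact m"
      using powser_coeff_unique[of c "\<lambda>z. (1 - z) powr (- \<beta>)" "\<lambda>j. pochhammer \<beta> j / fact j" m]
        c rho_series by blast
  qed
qed

lemma lnGamma_conv:
  fixes x y t :: real
  assumes "x > 0" "y > 0" "0 \<le> t" "t \<le> 1"
  shows "ln (Gamma ((1 - t) * x + t * y)) \<le> (1 - t) * ln (Gamma x) + t * ln (Gamma y)"
  using convex_onD[OF log_convex_Gamma_real, of t x y] assms by simp

lemma wendel:
  fixes x s :: real
  assumes "x > 0" "0 < s" "s < 1"
  shows "Gamma (x + s) \<le> x powr s * Gamma x"
proof -
  have "ln (Gamma ((1 - s) * x + s * (x + 1))) \<le> (1 - s) * ln (Gamma x) + s * ln (Gamma (x + 1))"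
    using lnGamma_conv[of x "x+1" s] assms by simp
  also have "Gamma (x + 1) = x * Gamma x"
    by (rule Gamma_plus1) (use assms in \<open>auto elim!: nonpos_Ints_cases\<close>)
  also have "ln (x * Gamma x) = ln x + ln (Gamma x)"
    by (rule ln_mult_pos) (use assms in auto)
  finally have "ln (Gamma (x + s)) \<le> ln (Gamma x) + s * ln x"
    by (simp add: algebra_simps)
  then have "exp (ln (Gamma (x + s))) \<le> exp (ln (Gamma x) + s * ln x)" by simp
  then show ?thesis using assms
    by (simp add: exp_add powr_def mult.commute)
qed

lemma wendel2:
  fixes y s :: real
  assumes "y > 0" "0 < s" "s < 1"
  shows "Gamma (y + 1) \<le> Gamma (y + s) * (y + s) powr (1 - s)"
proof -
  have "ln (Gamma ((1 - (1 - s)) * (y + s) + (1 - s) * (y + s + 1)))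
      \<le> (1 - (1 - s)) * ln (Gamma (y + s)) + (1 - s) * ln (Gamma (y + s + 1))"
    using lnGamma_conv[of "y + s" "y + s + 1" "1 - s"] assms by simp
  also have "Gamma (y + s + 1) = (y + s) * Gamma (y + s)"
    by (rule Gamma_plus1) (use assms in \<open>auto elim!: nonpos_Ints_cases\<close>)
  also have "ln ((y + s) * Gamma (y + s)) = ln (y + s) + ln (Gamma (y + s))"
    by (rule ln_mult_pos) (use assms in auto)
  also have "(1 - (1 - s)) * (y + s) + (1 - s) * (y + s + 1) = y + 1" by (simp add: algebra_simps)
  finally have "ln (Gamma (y + 1)) \<le> ln (Gamma (y + s)) + (1 - s) * ln (y + s)"
    by (simp add: algebra_simps)
  then have "exp (ln (Gamma (y + 1))) \<le> exp (ln (Gamma (y + s)) + (1 - s) * ln (y + s))" by simp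
  then show ?thesis using assms
    by (simp add: exp_add powr_def mult.commute)
qed

lemma rho_bound:
  fixes \<beta> :: real and m :: nat
  assumes "0 < \<beta>" "\<beta> < 1" "m \<ge> 1"
  shows "ml_rho \<beta> m \<le> real m powr (\<beta> - 1) / Gamma \<beta>"
    and "ml_rho \<beta> m \<ge> 0"
proof -
  obtain n where n: "m = Suc n" using assms(3) by (cases m) auto
  have nz: "\<beta> \<notin> \<int>\<^sub>\<le>\<^sub>0" using assms by (auto elim!: nonpos_Ints_cases)
  have r: "ml_rho \<beta> m = Gamma (\<beta> + real m) / (Gamma \<beta> * fact m)"
    by (simp add: ml_rho_eq pochhammer_Gamma[OF nz])
  have G: "Gamma (real m) = fact n"
    using Gamma_fact[of n] n by (simp add: add.commute)
  have f: "(fact m :: real) = real m * fact n" using n by simp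
  have "Gamma (real m + \<beta>) \<le> real m powr \<beta> * Gamma (real m)"
    using wendel[of "real m" \<beta>] assms by simp
  then have "Gamma (\<beta> + real m) / (Gamma \<beta> * fact m) \<le> real m powr \<beta> * Gamma (real m) / (Gamma \<beta> * fact m)"
    using assms by (intro divide_right_mono) (auto simp: add.commute)
  also have "\<dots> = real m powr \<beta> * fact n / (Gamma \<beta> * (real m * fact n))"
    using G f by simp
  also have "\<dots> = real m powr \<beta> / real m / Gamma \<beta>" by (simp add: field_simps)
  also have "real m powr \<beta> / real m = real m powr (\<beta> - 1)"
    using assms by (simp add: powr_diff)
  finally show "ml_rho \<beta> m \<le> real m powr (\<beta> - 1) / Gamma \<beta>" using r by simp
  show "ml_rho \<beta> m \<ge> 0" using r assms by simp
qed

lemma Gamma_ratio_bound: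
  fixes y \<beta> :: real
  assumes "y \<ge> 1" "0 < \<beta>" "\<beta> < 1"
  shows "Gamma y / Gamma (y + \<beta>) \<le> 2 * (y + \<beta>) powr (- \<beta>)"
proof -
  have y0: "y > 0" using assms by simp
  have "Gamma (y + 1) = y * Gamma y"
    by (rule Gamma_plus1) (use assms in \<open>auto elim!: nonpos_Ints_cases\<close>)
  with wendel2[OF y0 assms(2,3)] have "y * Gamma y \<le> Gamma (y + \<beta>) * (y + \<beta>) powr (1 - \<beta>)" by simp
  moreover have gp: "Gamma (y + \<beta>) > 0" using assms by simp
  ultimately have "Gamma y / Gamma (y + \<beta>) \<le> (y + \<beta>) powr (1 - \<beta>) / y"
    using y0 by (simp add: field_simps)
  also have "(y + \<beta>) powr (1 - \<beta>) = (y + \<beta>) * (y + \<beta>) powr (- \<beta>)"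
    using assms by (simp add: powr_diff powr_minus field_simps)
  also have "(y + \<beta>) * (y + \<beta>) powr (- \<beta>) / y \<le> 2 * (y + \<beta>) powr (- \<beta>)"
  proof -
    have "(y + \<beta>) / y \<le> 2" using assms y0 by (simp add: field_simps)
    then have "(y + \<beta>) / y * (y + \<beta>) powr (- \<beta>) \<le> 2 * (y + \<beta>) powr (- \<beta>)"
      by (rule mult_right_mono) simp
    then show ?thesis by simp
  qed
  finally show ?thesis .
qed

lemma ml_summable:
  fixes \<beta> a :: real
  assumes "0 < \<beta>" "\<beta> < 1"
  shows "summable (\<lambda>l. a ^ l / Gamma (1 + real l * \<beta>))"
proof -
  have lim: "(\<lambda>l::nat. \<bar>a\<bar> * (2 * (1 + real l * \<beta> + \<beta>) powr (- \<beta>))) \<longlonglongrightarrow> \<bar>a\<bar> * (2 * 0)"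
  proof (intro tendsto_intros tendsto_neg_powr)
    show "- \<beta> < 0" using assms by simp
    show "filterlim (\<lambda>l::nat. 1 + real l * \<beta> + \<beta>) at_top sequentially"
    proof -
      have "filterlim (\<lambda>l::nat. (1 + \<beta>) + \<beta> * real l) at_top sequentially"
        by (intro filterlim_tendsto_add_at_top[OF tendsto_const]
            filterlim_tendsto_pos_mult_at_top[OF tendsto_const]) (use assms filterlim_real_sequentially in auto)
      moreover have "(\<lambda>l::nat. (1 + \<beta>) + \<beta> * real l) = (\<lambda>l::nat. 1 + real l * \<beta> + \<beta>)"
        by (auto simp: algebra_simps)
      ultimately show ?thesis by simp
    qed
  qed
  have "eventually (\<lambda>l::nat. \<bar>a\<bar> * (2 * (1 + real l * \<beta> + \<beta>) powr (- \<beta>)) < 1/2) sequentially"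
    using order_tendstoD(2)[OF lim, of "1/2"] by simp
  then obtain N where N: "\<And>l. l \<ge> N \<Longrightarrow> \<bar>a\<bar> * (2 * (1 + real l * \<beta> + \<beta>) powr (- \<beta>)) < 1/2"
    by (auto simp: eventually_sequentially)
  show ?thesis
  proof (rule summable_ratio_test[of "1/2" N])
    fix l assume "l \<ge> N"
    define y where "y = 1 + real l * \<beta>"
    have y1: "y \<ge> 1" using assms by (simp add: y_def)
    have g1: "Gamma y > 0" "Gamma (y + \<beta>) > 0" using y1 assms by auto
    have r: "Gamma y / Gamma (y + \<beta>) \<le> 2 * (y + \<beta>) powr (- \<beta>)"
      by (rule Gamma_ratio_bound[OF y1 assms])
    have "\<bar>a\<bar> * (Gamma y / Gamma (y + \<beta>)) \<le> \<bar>a\<bar> * (2 * (y + \<beta>) powr (- \<beta>))"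
      by (rule mult_left_mono[OF r]) simp
    also have "\<dots> \<le> 1/2" using N[OF \<open>l \<ge> N\<close>] by (simp add: y_def)
    finally have key: "\<bar>a\<bar> * (Gamma y / Gamma (y + \<beta>)) \<le> 1/2" .
    have e: "1 + real (Suc l) * \<beta> = y + \<beta>" by (simp add: y_def algebra_simps)
    have "norm (a ^ Suc l / Gamma (1 + real (Suc l) * \<beta>)) = \<bar>a\<bar>^l * (\<bar>a\<bar> * (Gamma y / Gamma (y + \<beta>))) / Gamma y"
      unfolding e using g1 by (simp add: abs_mult power_abs field_simps)
    also have "\<dots> \<le> \<bar>a\<bar>^l * (1/2) / Gamma y"
      by (intro divide_right_mono mult_left_mono key) (use g1 in auto)
    also have "\<dots> = 1/2 * norm (a ^ l / Gamma (1 + real l * \<beta>))"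
      using g1 by (simp add: y_def power_abs)
    finally show "norm (a ^ Suc l / Gamma (1 + real (Suc l) * \<beta>)) \<le> 1/2 * norm (a ^ l / Gamma (1 + real l * \<beta>))" .
  qed simp
qed

lemma pointwise_bound:
  fixes \<beta> t :: real and k n l :: nat
  assumes b: "0 < \<beta>" "\<beta> < 1" and nk: "n < k"
    and t: "real n / real k < t" "t < real (Suc n) / real k"
  shows "ml_rho \<beta> (k - n) * (real n powr \<beta>) ^ l
     \<le> real k powr (\<beta> - 1 + real l * \<beta>) / Gamma \<beta> * (t powr (real l * \<beta>) * (1 - t) powr (\<beta> - 1))"
proof -
  have k0: "real k > 0" using nk by simp
  have t0: "t > 0" using t k0 by (smt (verit) divide_nonneg_pos of_nat_0_le_iff)
  have kt1: "real n < real k * t" using t(1) k0 by (simp add: field_simps)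
  have kt2: "real k * t < real n + 1" using t(2) k0 by (simp add: field_simps)
  have "real n + 1 \<le> real k" using nk by simp
  moreover have "real k * (1 - t) = real k - real k * t" by (simp add: algebra_simps)
  ultimately have pos: "real k * (1 - t) > 0" using kt2 by linarith
  have le: "real k * (1 - t) \<le> real (k - n)" using kt1 nk by (simp add: algebra_simps of_nat_diff)
  have G: "Gamma \<beta> > 0" using b by simp
  have r1: "ml_rho \<beta> (k - n) \<le> real (k - n) powr (\<beta> - 1) / Gamma \<beta>"
    using rho_bound(1)[OF b, of "k - n"] nk by simp
  have r0: "ml_rho \<beta> (k - n) \<ge> 0" using rho_bound(2)[OF b, of "k - n"] nk by simp
  have r2: "real (k - n) powr (\<beta> - 1) \<le> (real k * (1 - t)) powr (\<beta> - 1)"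
    by (rule powr_mono2') (use b pos le in auto)
  have "(1 - t) > 0" using pos k0 by (simp add: zero_less_mult_iff)
  then have r3: "(real k * (1 - t)) powr (\<beta> - 1) = real k powr (\<beta> - 1) * (1 - t) powr (\<beta> - 1)"
    using k0 by (simp add: powr_mult)
  have p1: "(real n powr \<beta>) ^ l \<le> ((real k * t) powr \<beta>) ^ l"
    by (intro power_mono powr_mono2) (use b kt1 in auto)
  have p2: "((real k * t) powr \<beta>) ^ l = real k powr (real l * \<beta>) * t powr (real l * \<beta>)"
    using k0 t0 by (simp add: powr_mult powr_power power_mult_distrib)
  have "ml_rho \<beta> (k - n) * (real n powr \<beta>) ^ l
      \<le> (real k powr (\<beta> - 1) * (1 - t) powr (\<beta> - 1) / Gamma \<beta>) * (real k powr (real l * \<beta>) * t powr (real l * \<beta>))"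
  proof (rule mult_mono)
    show "ml_rho \<beta> (k - n) \<le> real k powr (\<beta> - 1) * (1 - t) powr (\<beta> - 1) / Gamma \<beta>"
      using r1 r2 r3 G by (smt (verit) divide_right_mono)
  qed (use r0 p1 p2 G in auto)
  also have "\<dots> = real k powr (\<beta> - 1 + real l * \<beta>) / Gamma \<beta> * (t powr (real l * \<beta>) * (1 - t) powr (\<beta> - 1))"
  proof -
    have "real k powr (\<beta> - 1 + real l * \<beta>) = real k powr (\<beta> - 1) * real k powr (real l * \<beta>)"
      by (rule powr_add)
    then show ?thesis by (simp add: field_simps)
  qed
  finally show ?thesis .
qed

lemma sum_bound:
  fixes \<beta> :: real and k l :: nat
  assumes b: "0 < \<beta>" "\<beta> < 1" and k: "k \<ge> 1"
  shows "(\<Sum>j<k. ml_rho \<beta> (k - j) * (real j powr \<beta>) ^ l)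
     \<le> real k powr (\<beta> + real l * \<beta>) * Gamma (real l * \<beta> + 1) / Gamma (real l * \<beta> + 1 + \<beta>)"
proof -
  define F where "F = (\<lambda>t::real. t powr (real l * \<beta>) * (1 - t) powr (\<beta> - 1))"
  define C where "C = real k powr (\<beta> - 1 + real l * \<beta>) / Gamma \<beta>"
  have k0: "real k > 0" using k by simp
  have C0: "C \<ge> 0" using b by (simp add: C_def)
  have HB: "(F has_integral Beta (real l * \<beta> + 1) \<beta>) {0..1}"
  proof -
    have "0 \<le> real l * \<beta>" using b by simp
    then have "0 < real l * \<beta> + 1" by linarith
    then show ?thesis using has_integral_Beta_real[of "real l * \<beta> + 1" \<beta>] b by (simp add: F_def)
  qed
  have intF: "F integrable_on {a..c}" if "0 \<le> a" "c \<le> 1" for a c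
    by (rule integrable_on_subinterval[OF has_integral_integrable[OF HB]]) (use that in auto)
  have step: "ml_rho \<beta> (k - n) * (real n powr \<beta>) ^ l \<le> real k * C * integral {real n / real k..real (Suc n) / real k} F"
    if n: "n < k" for n
  proof -
    define a where "a = real n / real k"
    define c where "c = real (Suc n) / real k"
    define v where "v = ml_rho \<beta> (k - n) * (real n powr \<beta>) ^ l"
    have ac: "a \<le> c" using k0 by (simp add: a_def c_def divide_right_mono)
    have a0: "0 \<le> a" by (simp add: a_def)
    have c1: "c \<le> 1" using n k0 by (simp add: c_def)
    have ca: "c - a = 1 / real k" using k0 by (simp add: a_def c_def field_simps)
    have "((\<lambda>_. v) has_integral (v / real k)) {a..c}"
      using has_integral_const_real[of v a c] ac ca by (simp add: field_simps)
    then have h1: "((\<lambda>_. v) has_integral (v / real k)) {a<..<c}"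
      using has_integral_open_interval[of "\<lambda>_. v" "v / real k" a c] by simp
    have "((\<lambda>t. C * F t) has_integral (C * integral {a..c} F)) {a..c}"
      using has_integral_mult_right[OF integrable_integral[OF intF[OF a0 c1]], of C] by simp
    then have h2: "((\<lambda>t. C * F t) has_integral (C * integral {a..c} F)) {a<..<c}"
      using has_integral_open_interval[of "\<lambda>t. C * F t" _ a c] by simp
    have "v / real k \<le> C * integral {a..c} F"
    proof (rule has_integral_le[OF h1 h2])
      fix t assume "t \<in> {a<..<c}"
      then show "v \<le> C * F t"
        unfolding v_def C_def F_def
        by (intro pointwise_bound[OF b n]) (auto simp: a_def c_def)
    qed
    then have "v \<le> real k * C * integral {a..c} F" using k0 by (simp add: field_simps)
    then show ?thesis by (simp add: v_def a_def c_def)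
  qed
  have ind: "(\<Sum>j<n. ml_rho \<beta> (k - j) * (real j powr \<beta>) ^ l) \<le> real k * C * integral {0..real n / real k} F"
    if "n \<le> k" for n
    using that
  proof (induction n)
    case 0
    then show ?case by simp
  next
    case (Suc n)
    have e: "integral {0..real n / real k} F + integral {real n / real k..real (Suc n) / real k} F
        = integral {0..real (Suc n) / real k} F"
    proof (rule Henstock_Kurzweil_Integration.integral_combine[where a=0 and c="real n / real k" and b="real (Suc n) / real k" and f=F])
      show "0 \<le> real n / real k" by simp
      show "real n / real k \<le> real (Suc n) / real k" using k0 by (simp add: divide_right_mono)
      show "F integrable_on {0..real (Suc n) / real k}" using Suc.prems k0 by (intro intF) auto
    qed
    have "(\<Sum>j<Suc n. ml_rho \<beta> (k - j) * (real j powr \<beta>) ^ l)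
        = (\<Sum>j<n. ml_rho \<beta> (k - j) * (real j powr \<beta>) ^ l) + ml_rho \<beta> (k - n) * (real n powr \<beta>) ^ l"
      by simp
    also have "\<dots> \<le> real k * C * integral {0..real n / real k} F
        + real k * C * integral {real n / real k..real (Suc n) / real k} F"
      using Suc.IH Suc.prems step[of n] by (intro add_mono) auto
    also have "\<dots> = real k * C * integral {0..real (Suc n) / real k} F"
      by (simp only: distrib_left[symmetric] e)
    finally show ?case .
  qed
  have "(\<Sum>j<k. ml_rho \<beta> (k - j) * (real j powr \<beta>) ^ l) \<le> real k * C * integral {0..1} F"
    using ind[of k] k0 by simp
  also have "integral {0..1} F = Beta (real l * \<beta> + 1) \<beta>" using HB by (rule integral_unique)
  also have "real k * C * Beta (real l * \<beta> + 1) \<beta>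
      = real k powr (\<beta> + real l * \<beta>) * Gamma (real l * \<beta> + 1) / Gamma (real l * \<beta> + 1 + \<beta>)"
  proof -
    have "real k * real k powr (\<beta> - 1 + real l * \<beta>) = real k powr (\<beta> + real l * \<beta>)"
      using k0 by (simp add: powr_add powr_diff field_simps)
    moreover have "Gamma \<beta> > 0" using b by simp
    ultimately show ?thesis unfolding C_def Beta_def by (simp add: field_simps)
  qed
  finally show ?thesis .
qed

theorem lemma2p3:
  fixes \<beta> T \<mu> :: real and nT k :: nat
  assumes "0 < \<beta>" "\<beta> < 1" "T > 0" "nT > 0" "\<mu> > 0" "1 \<le> k" "k \<le> nT"
  defines "\<tau> \<equiv> T / real nT"
  shows "\<mu> * (\<Sum>j<k. (\<tau> powr \<beta> * ml_rho \<beta> (k - j))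
              * mittag_leffler \<beta> (\<mu> * (real j * \<tau>) powr \<beta>))
         \<le> mittag_leffler \<beta> (\<mu> * (real k * \<tau>) powr \<beta>) - 1"
proof -
  have b: "0 < \<beta>" "\<beta> < 1" using assms by auto
  have tau: "\<tau> > 0" using assms by (simp add: \<tau>_def)
  define x where "x = \<tau> powr \<beta>"
  have x0: "x > 0" using tau by (simp add: x_def)
  define m where "m = \<mu> * x"
  have m0: "m > 0" using x0 assms by (simp add: m_def)
  define G where "G = (\<lambda>l::nat. Gamma (1 + real l * \<beta>))"
  have Gpos: "G l > 0" for l using b by (simp add: G_def add_pos_nonneg)
  have arg: "\<mu> * (real j * \<tau>) powr \<beta> = m * real j powr \<beta>" for j
    using tau by (simp add: m_def x_def powr_mult)
  define S where "S = (\<lambda>l. \<Sum>j<k. ml_rho \<beta> (k - j) * (real j powr \<beta>) ^ l)"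
  define Tm where "Tm = (\<lambda>l. m ^ Suc l / G l * S l)"
  define R where "R = (\<lambda>l. (m * real k powr \<beta>) ^ Suc l / G (Suc l))"
  have summE: "summable (\<lambda>l. a ^ l / G l)" for a
    unfolding G_def by (rule ml_summable[OF b])
  have E: "mittag_leffler \<beta> a = (\<Sum>l. a ^ l / G l)" for a
    by (simp add: mittag_leffler_def G_def)
  have termj: "\<mu> * ((x * ml_rho \<beta> (k - j)) * mittag_leffler \<beta> (m * real j powr \<beta>))
      = (\<Sum>l. m * ml_rho \<beta> (k - j) * ((m * real j powr \<beta>) ^ l / G l))" for j
  proof -
    have "(\<Sum>l. m * ml_rho \<beta> (k - j) * ((m * real j powr \<beta>) ^ l / G l))
        = m * ml_rho \<beta> (k - j) * (\<Sum>l. (m * real j powr \<beta>) ^ l / G l)"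
      by (rule suminf_mult[OF summE])
    then show ?thesis by (simp add: E m_def)
  qed
  have LHS: "\<mu> * (\<Sum>j<k. (\<tau> powr \<beta> * ml_rho \<beta> (k - j)) * mittag_leffler \<beta> (\<mu> * (real j * \<tau>) powr \<beta>))
      = (\<Sum>l. Tm l)"
  proof -
    have "\<mu> * (\<Sum>j<k. (\<tau> powr \<beta> * ml_rho \<beta> (k - j)) * mittag_leffler \<beta> (\<mu> * (real j * \<tau>) powr \<beta>))
        = (\<Sum>j<k. \<mu> * ((x * ml_rho \<beta> (k - j)) * mittag_leffler \<beta> (m * real j powr \<beta>)))"
      by (simp add: sum_distrib_left arg x_def)
    also have "\<dots> = (\<Sum>j<k. \<Sum>l. m * ml_rho \<beta> (k - j) * ((m * real j powr \<beta>) ^ l / G l))"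
      by (simp add: termj)
    also have "\<dots> = (\<Sum>l. \<Sum>j<k. m * ml_rho \<beta> (k - j) * ((m * real j powr \<beta>) ^ l / G l))"
      by (rule suminf_sum[symmetric]) (intro summable_mult summE)
    also have "(\<lambda>l. \<Sum>j<k. m * ml_rho \<beta> (k - j) * ((m * real j powr \<beta>) ^ l / G l)) = Tm"
      by (rule ext) (simp add: Tm_def S_def sum_distrib_left power_mult_distrib field_simps)
    finally show ?thesis .
  qed
  have sumT: "summable Tm"
  proof -
    have "summable (\<lambda>l. \<Sum>j<k. m * ml_rho \<beta> (k - j) * ((m * real j powr \<beta>) ^ l / G l))"
      by (intro summable_sum summable_mult summE)
    moreover have "(\<lambda>l. \<Sum>j<k. m * ml_rho \<beta> (k - j) * ((m * real j powr \<beta>) ^ l / G l)) = Tm"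
      by (rule ext) (simp add: Tm_def S_def sum_distrib_left power_mult_distrib field_simps)
    ultimately show ?thesis by simp
  qed
  have RHS: "mittag_leffler \<beta> (\<mu> * (real k * \<tau>) powr \<beta>) - 1 = (\<Sum>l. R l)"
  proof -
    have "(\<Sum>l. (m * real k powr \<beta>) ^ Suc l / G (Suc l))
        = (\<Sum>l. (m * real k powr \<beta>) ^ l / G l) - (m * real k powr \<beta>) ^ 0 / G 0"
      by (rule suminf_split_head[OF summE])
    moreover have "G 0 = 1" by (simp add: G_def)
    ultimately show ?thesis by (simp add: E arg R_def)
  qed
  have sumR: "summable R"
    unfolding R_def using summE[of "m * real k powr \<beta>"] by (subst summable_Suc_iff)
  have TR: "Tm l \<le> R l" for l
  proof -
    have "S l \<le> real k powr (\<beta> + real l * \<beta>) * Gamma (real l * \<beta> + 1) / Gamma (real l * \<beta> + 1 + \<beta>)"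
      unfolding S_def by (rule sum_bound[OF b assms(6)])
    then have "Tm l \<le> m ^ Suc l / G l * (real k powr (\<beta> + real l * \<beta>) * Gamma (real l * \<beta> + 1) / Gamma (real l * \<beta> + 1 + \<beta>))"
      unfolding Tm_def using m0 Gpos[of l] by (intro mult_left_mono) auto
    also have "\<dots> = m ^ Suc l * real k powr (\<beta> + real l * \<beta>) / G (Suc l)"
    proof -
      have "G l = Gamma (real l * \<beta> + 1)" by (simp add: G_def add.commute)
      moreover have "G (Suc l) = Gamma (real l * \<beta> + 1 + \<beta>)" by (simp add: G_def algebra_simps)
      ultimately show ?thesis using Gpos[of l] Gpos[of "Suc l"] by (simp add: field_simps)
    qed
    also have "\<dots> = R l"
    proof -
      have "(real k powr \<beta>) ^ Suc l = real k powr (\<beta> + real l * \<beta>)"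
        using assms(6) by (simp add: powr_power algebra_simps powr_add)
      then show ?thesis by (simp add: R_def power_mult_distrib)
    qed
    finally show ?thesis .
  qed
  show ?thesis
    unfolding LHS RHS by (rule suminf_le[OF TR sumT sumR])
qed

end
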